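(* Let $p=(p_1,\dots,p_m)$ and $q=(q_1,\dots,q_m)$ be ordered $m$-tuples of distinct points of $\overline{\mathbf H^n_{\mathbb H}}$, each with the first $i$ points in $\partial\mathbf H^n_{\mathbb H}$ and the remaining points in $\mathbf H^n_{\mathbb H}$, and let $G_1,G_2$ be semi-normalized Gram matrices of lifts of $p$ and $q$, represented by $V_{G_1},V_{G_2}$. Then $p$ and $q$ are congruent under $\mathrm{PSp}(n,1)$ if and only if $O_{V_{G_1}}=O_{V_{G_2}}$.
   Context: Setting: $m\ge4$, $3\le i\le m$; $\mathbb H^{n,1}$ is the right quaternionic space $\mathbb H^{n+1}$ with form $\langle\mathbf z,\mathbf w\rangle=\bar w_{n+1}z_1+\bar w_2z_2+\cdots+\bar w_nz_n+\bar w_1z_{n+1}$; $\mathbf H^n_{\mathbb H}$ and $\partial\mathbf H^n_{\mathbb H}$ are the lines of negative and of nonzero null vectors; $\mathrm{PSp}(n,1)=\mathrm{Sp}(n,1)/\{\pm I\}$ with $\mathrm{Sp}(n,1)$ the form-preserving group; $p,q$ congruent means some $g\in\mathrm{PSp}(n,1)$ has $g(p_k)=q_k$ for all $k$. The Gram matrix of a lift is $g_{kj}=\langle\mathbf p_j,\mathbf p_k\rangle$; it is semi-normalized if $g_{kk}=0$ for $k\le i$, $g_{kk}=-1$ for $k>i$, $g_{1j}=1$ for $2\le j\le i$, $|g_{23}|=1$, and $g_{1j}=r_{1j}>0$ real for $i<j\le m$. It is represented by $V_G=(r_{1(i+1)},\dots,r_{1m},g_{23},\dots,g_{2m},g_{34},\dots,g_{3m},\dots,g_{(m-1)m})$,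 and $O_V=\{\bar\mu V\mu:\mu\text{ a unit quaternion}\}$ (componentwise). *)

theory Defs
  imports Complex_Main
begin

codatatype quat = Quat (Re1: real) (Im1: real) (Im2: real) (Im3: real)

lemma quat_eq_iff: "x = y \<longleftrightarrow> Re1 x = Re1 y \<and> Im1 x = Im1 y \<and> Im2 x = Im2 y \<and> Im3 x = Im3 y"
  by (cases x; cases y) auto

instantiation quat :: ring_1
begin
primcorec zero_quat where "Re1 0 = 0" | "Im1 0 = 0" | "Im2 0 = 0" | "Im3 0 = 0"
primcorec one_quat where "Re1 1 = 1" | "Im1 1 = 0" | "Im2 1 = 0" | "Im3 1 = 0"
primcorec plus_quat where
  "Re1 (x + y) = Re1 x + Re1 y" | "Im1 (x + y) = Im1 x + Im1 y"
| "Im2 (x + y) = Im2 x + Im2 y" | "Im3 (x + y) = Im3 x + Im3 y"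
primcorec uminus_quat where
  "Re1 (- x) = - Re1 x" | "Im1 (- x) = - Im1 x" | "Im2 (- x) = - Im2 x" | "Im3 (- x) = - Im3 x"
primcorec minus_quat where
  "Re1 (x - y) = Re1 x - Re1 y" | "Im1 (x - y) = Im1 x - Im1 y"
| "Im2 (x - y) = Im2 x - Im2 y" | "Im3 (x - y) = Im3 x - Im3 y"
primcorec times_quat where
  "Re1 (x * y) = Re1 x * Re1 y - Im1 x * Im1 y - Im2 x * Im2 y - Im3 x * Im3 y"
| "Im1 (x * y) = Re1 x * Im1 y + Im1 x * Re1 y + Im2 x * Im3 y - Im3 x * Im2 y"
| "Im2 (x * y) = Re1 x * Im2 y - Im1 x * Im3 y + Im2 x * Re1 y + Im3 x * Im1 y"
| "Im3 (x * y) = Re1 x * Im3 y + Im1 x * Im2 y - Im2 x * Im1 y + Im3 x * Re1 y"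
instance
  by standard (simp_all add: quat_eq_iff algebra_simps)
end

primcorec qcnj :: "quat \<Rightarrow> quat" where
  "Re1 (qcnj x) = Re1 x" | "Im1 (qcnj x) = - Im1 x" | "Im2 (qcnj x) = - Im2 x" | "Im3 (qcnj x) = - Im3 x"

definition qnormsq :: "quat \<Rightarrow> real" where
  "qnormsq x = (Re1 x)\<^sup>2 + (Im1 x)\<^sup>2 + (Im2 x)\<^sup>2 + (Im3 x)\<^sup>2"

definition qreal :: "real \<Rightarrow> quat" where
  "qreal r = Quat r 0 0 0"

text \<open>Vectors of the right quaternionic space H^{n+1} are functions nat => quat,
  coordinates indexed by 1..n+1, vanishing elsewhere.\<close>

definition qvecs :: "nat \<Rightarrow> (nat \<Rightarrow> quat) set" where
  "qvecs n = {z. \<forall>k. k \<notin> {1..n+1} \<longrightarrow> z k = 0}"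

definition rsmult :: "(nat \<Rightarrow> quat) \<Rightarrow> quat \<Rightarrow> (nat \<Rightarrow> quat)" where
  "rsmult z c = (\<lambda>k. z k * c)"

definition hform :: "nat \<Rightarrow> (nat \<Rightarrow> quat) \<Rightarrow> (nat \<Rightarrow> quat) \<Rightarrow> quat" where
  "hform n z w = qcnj (w (n+1)) * z 1 + (\<Sum>k\<in>{2..n}. qcnj (w k) * z k) + qcnj (w 1) * z (n+1)"

text \<open>Points of the closure of quaternionic hyperbolic space: quaternionic lines
  z H^* = {z lambda | lambda nonzero} spanned by a nonzero vector z.\<close>
definition qline :: "(nat \<Rightarrow> quat) \<Rightarrow> (nat \<Rightarrow> quat) set" where
  "qline z = {rsmult z c | c. c \<noteq> 0}"

definition hyp_space :: "nat \<Rightarrow> (nat \<Rightarrow> quat) set set" where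
  "hyp_space n = {qline z | z. z \<in> qvecs n \<and> hform n z z = qreal (Re1 (hform n z z)) \<and> Re1 (hform n z z) < 0}"

definition hyp_boundary :: "nat \<Rightarrow> (nat \<Rightarrow> quat) set set" where
  "hyp_boundary n = {qline z | z. z \<in> qvecs n \<and> z \<noteq> (\<lambda>_. 0) \<and> hform n z z = 0}"

text \<open>Quaternionic (n+1)x(n+1) matrices act on the left on column vectors
  (hence right-linearly).\<close>
definition mat_app :: "nat \<Rightarrow> (nat \<Rightarrow> nat \<Rightarrow> quat) \<Rightarrow> (nat \<Rightarrow> quat) \<Rightarrow> (nat \<Rightarrow> quat)" where
  "mat_app n A z = (\<lambda>k. if k \<in> {1..n+1} then (\<Sum>j\<in>{1..n+1}. A k j * z j) else 0)"

definition mat_mult :: "nat \<Rightarrow> (nat \<Rightarrow> nat \<Rightarrow> quat) \<Rightarrow> (nat \<Rightarrow> nat \<Rightarrow> quat) \<Rightarrow> (nat \<Rightarrow> nat \<Rightarrow> quat)" where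
  "mat_mult n A B = (\<lambda>k l. if k \<in> {1..n+1} \<and> l \<in> {1..n+1} then (\<Sum>j\<in>{1..n+1}. A k j * B j l) else 0)"

definition mat_id :: "nat \<Rightarrow> (nat \<Rightarrow> nat \<Rightarrow> quat)" where
  "mat_id n = (\<lambda>k l. if k \<in> {1..n+1} \<and> k = l then 1 else 0)"

definition qmatrices :: "nat \<Rightarrow> (nat \<Rightarrow> nat \<Rightarrow> quat) set" where
  "qmatrices n = {A. \<forall>k l. k \<notin> {1..n+1} \<or> l \<notin> {1..n+1} \<longrightarrow> A k l = 0}"

definition Sp :: "nat \<Rightarrow> (nat \<Rightarrow> nat \<Rightarrow> quat) set" where
  "Sp n = {A \<in> qmatrices n.
      (\<exists>B \<in> qmatrices n. mat_mult n A B = mat_id n \<and> mat_mult n B A = mat_id n) \<and>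
      (\<forall>z \<in> qvecs n. \<forall>w \<in> qvecs n. hform n (mat_app n A z) (mat_app n A w) = hform n z w)}"

text \<open>Action on points (lines): image of the line. Since -I acts trivially,
  this is the action of PSp(n,1) = Sp(n,1)/{+-I}.\<close>
definition act :: "nat \<Rightarrow> (nat \<Rightarrow> nat \<Rightarrow> quat) \<Rightarrow> (nat \<Rightarrow> quat) set \<Rightarrow> (nat \<Rightarrow> quat) set" where
  "act n A P = mat_app n A ` P"

definition congruent_tuples :: "nat \<Rightarrow> nat \<Rightarrow> (nat \<Rightarrow> (nat \<Rightarrow> quat) set) \<Rightarrow> (nat \<Rightarrow> (nat \<Rightarrow> quat) set) \<Rightarrow> bool" where
  "congruent_tuples n m p q = (\<exists>A \<in> Sp n. \<forall>k\<in>{1..m}. act n A (p k) = q k)"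

definition config :: "nat \<Rightarrow> nat \<Rightarrow> nat \<Rightarrow> (nat \<Rightarrow> (nat \<Rightarrow> quat) set) \<Rightarrow> bool" where
  "config n m i p = (inj_on p {1..m} \<and> (\<forall>k\<in>{1..i}. p k \<in> hyp_boundary n)
      \<and> (\<forall>k\<in>{i+1..m}. p k \<in> hyp_space n))"

definition is_lift :: "nat \<Rightarrow> (nat \<Rightarrow> (nat \<Rightarrow> quat) set) \<Rightarrow> (nat \<Rightarrow> nat \<Rightarrow> quat) \<Rightarrow> bool" where
  "is_lift m p P = (\<forall>k\<in>{1..m}. P k \<in> p k)"

definition gram :: "nat \<Rightarrow> nat \<Rightarrow> (nat \<Rightarrow> nat \<Rightarrow> quat) \<Rightarrow> (nat \<Rightarrow> nat \<Rightarrow> quat)" where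
  "gram n m P = (\<lambda>k j. if k \<in> {1..m} \<and> j \<in> {1..m} then hform n (P j) (P k) else 0)"

definition semi_normalized :: "nat \<Rightarrow> nat \<Rightarrow> (nat \<Rightarrow> nat \<Rightarrow> quat) \<Rightarrow> bool" where
  "semi_normalized m i g =
     ((\<forall>k\<in>{1..i}. g k k = 0) \<and> (\<forall>k\<in>{i+1..m}. g k k = - 1)
      \<and> (\<forall>j\<in>{2..i}. g 1 j = 1) \<and> qnormsq (g 2 3) = 1
      \<and> (\<forall>j\<in>{i+1..m}. \<exists>r::real. r > 0 \<and> g 1 j = qreal r))"

text \<open>The representing vector V_G = (r_{1(i+1)},...,r_{1m}, g_{23},...,g_{2m}, ..., g_{(m-1)m}),
  encoded as a function on index pairs (k,j): entry (1,j) for i<j<=m and (k,j) for 2<=k<j<=m,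
  zero elsewhere.\<close>
definition V_of :: "nat \<Rightarrow> nat \<Rightarrow> (nat \<Rightarrow> nat \<Rightarrow> quat) \<Rightarrow> (nat \<times> nat \<Rightarrow> quat)" where
  "V_of m i g = (\<lambda>(k,j). if (k = 1 \<and> i < j \<and> j \<le> m) \<or> (2 \<le> k \<and> k < j \<and> j \<le> m) then g k j else 0)"

definition orbit_V :: "(nat \<times> nat \<Rightarrow> quat) \<Rightarrow> (nat \<times> nat \<Rightarrow> quat) set" where
  "orbit_V V = {(\<lambda>kj. qcnj \<mu> * V kj * \<mu>) | \<mu>. qnormsq \<mu> = 1}"

end

theory Submission
  imports Defs
begin

lemma qcnj_add[simp]: "qcnj (a + b) = qcnj a + qcnj b" by (simp add: quat_eq_iff)
lemma qcnj_sub[simp]: "qcnj (a - b) = qcnj a - qcnj b" by (simp add: quat_eq_iff)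
lemma qcnj_neg[simp]: "qcnj (- a) = - qcnj a" by (simp add: quat_eq_iff)
lemma qcnj_mult: "qcnj (a * b) = qcnj b * qcnj a" by (simp add: quat_eq_iff algebra_simps)
lemma qcnj_qcnj[simp]: "qcnj (qcnj a) = a" by (simp add: quat_eq_iff)
lemma qcnj_0[simp]: "qcnj 0 = 0" by (simp add: quat_eq_iff)
lemma qcnj_1[simp]: "qcnj 1 = 1" by (simp add: quat_eq_iff)
lemma qcnj_eq0[simp]: "qcnj a = 0 \<longleftrightarrow> a = 0" by (simp add: quat_eq_iff)
lemma qcnj_sum: "qcnj (sum f A) = sum (\<lambda>x. qcnj (f x)) A"
  by (induction A rule: infinite_finite_induct) auto
lemma qreal_0[simp]: "qreal 0 = 0" by (simp add: quat_eq_iff qreal_def)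
lemma qreal_1[simp]: "qreal 1 = 1" by (simp add: quat_eq_iff qreal_def)
lemma qreal_comm: "qreal r * a = a * qreal r" by (simp add: quat_eq_iff qreal_def)
lemma qreal_mult: "qreal r * qreal s = qreal (r * s)" by (simp add: quat_eq_iff qreal_def)
lemma qreal_add: "qreal r + qreal s = qreal (r + s)" by (simp add: quat_eq_iff qreal_def)
lemma qreal_neg: "- qreal r = qreal (- r)" by (simp add: quat_eq_iff qreal_def)
lemma qreal_inj: "qreal r = qreal s \<longleftrightarrow> r = s" by (simp add: quat_eq_iff qreal_def)
lemma qcnj_qreal[simp]: "qcnj (qreal r) = qreal r" by (simp add: quat_eq_iff qreal_def)
lemma Re1_qreal[simp]: "Re1 (qreal r) = r" by (simp add: qreal_def)
lemma qreal_neg1: "qreal (-1) = -1" by (simp add: quat_eq_iff qreal_def)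

lemma qnormsq_cnj_left: "qcnj a * a = qreal (qnormsq a)"
  by (simp add: quat_eq_iff qreal_def qnormsq_def power2_eq_square algebra_simps)
lemma qnormsq_cnj_right: "a * qcnj a = qreal (qnormsq a)"
  by (simp add: quat_eq_iff qreal_def qnormsq_def power2_eq_square algebra_simps)
lemma qnormsq_nonneg: "qnormsq a \<ge> 0" by (simp add: qnormsq_def)
lemma qnormsq_eq0: "qnormsq a = 0 \<longleftrightarrow> a = 0"
  by (simp add: qnormsq_def quat_eq_iff add_nonneg_eq_0_iff)
lemma qnormsq_pos: "a \<noteq> 0 \<Longrightarrow> qnormsq a > 0"
  using qnormsq_eq0 qnormsq_nonneg by (metis less_eq_real_def)
lemma qnormsq_mult: "qnormsq (a * b) = qnormsq a * qnormsq b"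
  by (simp add: qnormsq_def power2_eq_square algebra_simps)
lemma qnormsq_cnj[simp]: "qnormsq (qcnj a) = qnormsq a" by (simp add: qnormsq_def)
lemma qnormsq_qreal: "qnormsq (qreal r) = r^2" by (simp add: qnormsq_def qreal_def)
lemma qnormsq_1[simp]: "qnormsq 1 = 1" by (simp add: qnormsq_def)

definition qinv :: "quat \<Rightarrow> quat" where "qinv a = qcnj a * qreal (1 / qnormsq a)"

lemma qinv_right: "a \<noteq> 0 \<Longrightarrow> a * qinv a = 1"
proof -
  assume "a \<noteq> 0" then have "qnormsq a \<noteq> 0" by (simp add: qnormsq_eq0)
  then show ?thesis unfolding qinv_def
    by (simp add: mult.assoc[symmetric] qnormsq_cnj_right qreal_mult)
qed
lemma qinv_left: "a \<noteq> 0 \<Longrightarrow> qinv a * a = 1"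
proof -
  assume "a \<noteq> 0" then have "qnormsq a \<noteq> 0" by (simp add: qnormsq_eq0)
  then show ?thesis unfolding qinv_def
    by (simp add: mult.assoc qreal_comm[of _ a] mult.assoc[symmetric] qnormsq_cnj_left qreal_mult)
qed
lemma qinv_nz: "a \<noteq> 0 \<Longrightarrow> qinv a \<noteq> 0"
  using qinv_right by force
lemma q_no_zero_div: "(a::quat) * b = 0 \<Longrightarrow> a = 0 \<or> b = 0"
proof (rule ccontr)
  assume "a * b = 0" "\<not> (a = 0 \<or> b = 0)"
  then have "qinv a * (a * b) = b" by (metis mult.assoc qinv_left mult_1_left)
  with \<open>a * b = 0\<close> \<open>\<not> _\<close> show False by simp
qed
lemma q_mult_nz: "(a::quat) \<noteq> 0 \<Longrightarrow> b \<noteq> 0 \<Longrightarrow> a * b \<noteq> 0" using q_no_zero_div by blast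


lemma hform_add_left: "hform n (\<lambda>k. x k + y k) w = hform n x w + hform n y w"
  by (simp add: hform_def distrib_left sum.distrib algebra_simps)
lemma hform_sub_left: "hform n (\<lambda>k. x k - y k) w = hform n x w - hform n y w"
  by (simp add: hform_def right_diff_distrib sum_subtractf algebra_simps)
lemma hform_smult_left: "hform n (\<lambda>k. x k * c) w = hform n x w * c"
  by (simp add: hform_def sum_distrib_right distrib_right mult.assoc)
lemma hform_add_right: "hform n z (\<lambda>k. x k + y k) = hform n z x + hform n z y"
  by (simp add: hform_def distrib_right sum.distrib algebra_simps)
lemma hform_sub_right: "hform n z (\<lambda>k. x k - y k) = hform n z x - hform n z y"
  by (simp add: hform_def left_diff_distrib sum_subtractf algebra_simps)
lemma hform_smult_right: "hform n z (\<lambda>k. x k * c) = qcnj c * hform n z x"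
  by (simp add: hform_def sum_distrib_left distrib_left mult.assoc qcnj_mult)
lemma hform_cnj: "qcnj (hform n z w) = hform n w z"
  by (simp add: hform_def qcnj_sum qcnj_mult algebra_simps)
lemma hform_real: "hform n z z = qreal (Re1 (hform n z z))"
proof -
  have "qcnj (hform n z z) = hform n z z" by (simp add: hform_cnj)
  then have "Im1 (hform n z z) = 0 \<and> Im2 (hform n z z) = 0 \<and> Im3 (hform n z z) = 0"
    by (metis qcnj.sel(2,3,4) neg_equal_zero)
  then show ?thesis by (simp add: quat_eq_iff qreal_def)
qed
lemma hform_rsmult_left: "hform n (rsmult x c) w = hform n x w * c"
  by (simp add: rsmult_def hform_smult_left)
lemma hform_rsmult_right: "hform n z (rsmult x c) = qcnj c * hform n z x"
  by (simp add: rsmult_def hform_smult_right)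


section \<open>Matrices\<close>

declare sum.cl_ivl_Suc [simp del]

lemma mat_app_qvecs: "mat_app n A z \<in> qvecs n"
  by (simp add: mat_app_def qvecs_def)
lemma mat_mult_qmat: "mat_mult n A B \<in> qmatrices n"
  by (auto simp: mat_mult_def qmatrices_def)
lemma rsmult_qvecs: "z \<in> qvecs n \<Longrightarrow> rsmult z c \<in> qvecs n"
  by (simp add: rsmult_def qvecs_def)

lemma if10_mult[simp]: "(if c then 1 else 0) * (x::quat) = (if c then x else 0)" by simp
lemma mult_if10[simp]: "(x::quat) * (if c then 1 else 0) = (if c then x else 0)" by simp

lemma mat_app_in: "k \<in> {1..n+1} \<Longrightarrow> mat_app n A z k = (\<Sum>j\<in>{1..n+1}. A k j * z j)"
  by (simp add: mat_app_def)
lemma mat_app_out: "k \<notin> {1..n+1} \<Longrightarrow> mat_app n A z k = 0"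
  unfolding mat_app_def by (simp only: if_False)

lemma mat_app_comp: "mat_app n A (mat_app n B z) = mat_app n (mat_mult n A B) z"
proof
  fix k
  show "mat_app n A (mat_app n B z) k = mat_app n (mat_mult n A B) z k"
  proof (cases "k \<in> {1..n+1}")
    case True
    have "mat_app n A (mat_app n B z) k = (\<Sum>j\<in>{1..n+1}. A k j * (\<Sum>l\<in>{1..n+1}. B j l * z l))"
      using True by (simp only: mat_app_in cong: sum.cong)
    also have "\<dots> = (\<Sum>j\<in>{1..n+1}. \<Sum>l\<in>{1..n+1}. A k j * B j l * z l)"
      by (simp only: sum_distrib_left mult.assoc)
    also have "\<dots> = (\<Sum>l\<in>{1..n+1}. \<Sum>j\<in>{1..n+1}. A k j * B j l * z l)"
      by (rule sum.swap)
    also have "\<dots> = (\<Sum>l\<in>{1..n+1}. (\<Sum>j\<in>{1..n+1}. A k j * B j l) * z l)"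
      by (simp only: sum_distrib_right)
    also have "\<dots> = (\<Sum>l\<in>{1..n+1}. mat_mult n A B k l * z l)"
      using True by (intro sum.cong refl) (simp add: mat_mult_def)
    also have "\<dots> = mat_app n (mat_mult n A B) z k"
      using True by (simp only: mat_app_in)
    finally show ?thesis .
  qed (simp add: mat_app_out)
qed

lemma mat_id_app: "z \<in> qvecs n \<Longrightarrow> mat_app n (mat_id n) z = z"
proof
  fix k assume z: "z \<in> qvecs n"
  show "mat_app n (mat_id n) z k = z k"
  proof (cases "k \<in> {1..n+1}")
    case True
    have "mat_app n (mat_id n) z k = (\<Sum>j\<in>{1..n+1}. (if k = j then z j else 0))"
      using True by (simp only: mat_app_in) (auto simp: mat_id_def intro!: sum.cong)
    also have "\<dots> = z k" using True by (subst sum.delta') auto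
    finally show ?thesis .
  next
    case False then show ?thesis using z by (simp add: mat_app_out qvecs_def)
  qed
qed

lemma mat_app_rsmult: "mat_app n A (rsmult z c) = rsmult (mat_app n A z) c"
  by (auto simp: mat_app_def rsmult_def sum_distrib_right mult.assoc)

lemma mat_mult_id_from_fun:
  assumes A: "A \<in> qmatrices n" and B: "B \<in> qmatrices n"
    and h: "\<forall>z\<in>qvecs n. mat_app n A (mat_app n B z) = z"
  shows "mat_mult n A B = mat_id n"
proof (intro ext)
  fix k l
  show "mat_mult n A B k l = mat_id n k l"
  proof (cases "k \<in> {1..n+1} \<and> l \<in> {1..n+1}")
    case True
    define e where "e = (\<lambda>j. if j = l then (1::quat) else 0)"
    have e: "e \<in> qvecs n" using True by (auto simp: e_def qvecs_def)
    have Be: "mat_app n B e = (\<lambda>j. if j \<in> {1..n+1} then B j l else 0)"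
    proof
      fix j show "mat_app n B e j = (if j \<in> {1..n+1} then B j l else 0)"
      proof (cases "j \<in> {1..n+1}")
        case True2: True
        have "mat_app n B e j = (\<Sum>t\<in>{1..n+1}. if t = l then B j t else 0)"
          using True2 by (simp only: mat_app_in) (auto simp: e_def intro!: sum.cong)
        also have "\<dots> = B j l" using True by (subst sum.delta) auto
        finally show ?thesis using True2 by simp
      next
        case False2: False
        show ?thesis by (simp only: mat_app_out[OF False2] if_not_P[OF False2])
      qed
    qed
    have "mat_app n A (mat_app n B e) k = (\<Sum>j\<in>{1..n+1}. A k j * (if j \<in> {1..n+1} then B j l else 0))"
      using True by (simp only: Be mat_app_in)
    also have "\<dots> = mat_mult n A B k l"
      using True unfolding mat_mult_def by (auto intro!: sum.cong)
    finally have "mat_app n A (mat_app n B e) k = mat_mult n A B k l" .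
    moreover have "mat_app n A (mat_app n B e) k = e k" using h e by simp
    ultimately show ?thesis using True by (simp add: e_def mat_id_def)
  next
    case False
    then show ?thesis by (auto simp: mat_mult_def mat_id_def)
  qed
qed

lemma Sp_intro:
  assumes "A \<in> qmatrices n" "B \<in> qmatrices n"
    "\<forall>z\<in>qvecs n. mat_app n A (mat_app n B z) = z"
    "\<forall>z\<in>qvecs n. mat_app n B (mat_app n A z) = z"
    "\<forall>z\<in>qvecs n. \<forall>w\<in>qvecs n. hform n (mat_app n A z) (mat_app n A w) = hform n z w"
  shows "A \<in> Sp n"
  unfolding Sp_def using assms mat_mult_id_from_fun by blast

lemma Sp_inverse:
  assumes "A \<in> Sp n"
  shows "\<exists>B\<in>qmatrices n. (\<forall>z\<in>qvecs n. mat_app n A (mat_app n B z) = z) \<and>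
          (\<forall>z\<in>qvecs n. mat_app n B (mat_app n A z) = z)"
proof -
  obtain B where "B \<in> qmatrices n" "mat_mult n A B = mat_id n" "mat_mult n B A = mat_id n"
    using assms unfolding Sp_def by blast
  then show ?thesis by (metis mat_app_comp mat_id_app)
qed

lemma Sp_qmat: "A \<in> Sp n \<Longrightarrow> A \<in> qmatrices n" by (simp add: Sp_def)
lemma Sp_hform: "A \<in> Sp n \<Longrightarrow> z \<in> qvecs n \<Longrightarrow> w \<in> qvecs n \<Longrightarrow>
   hform n (mat_app n A z) (mat_app n A w) = hform n z w" by (simp add: Sp_def)

lemma Sp_mult:
  assumes S: "S \<in> Sp n" and A: "A \<in> Sp n"
  shows "mat_mult n S A \<in> Sp n"
proof -
  obtain BS where BS: "BS \<in> qmatrices n" "\<forall>z\<in>qvecs n. mat_app n S (mat_app n BS z) = z"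
      "\<forall>z\<in>qvecs n. mat_app n BS (mat_app n S z) = z" using Sp_inverse[OF S] by blast
  obtain BA where BA: "BA \<in> qmatrices n" "\<forall>z\<in>qvecs n. mat_app n A (mat_app n BA z) = z"
      "\<forall>z\<in>qvecs n. mat_app n BA (mat_app n A z) = z" using Sp_inverse[OF A] by blast
  show ?thesis
  proof (rule Sp_intro[OF mat_mult_qmat mat_mult_qmat[of n BA BS]], goal_cases)
    case 1 show ?case using BS BA by (simp add: mat_app_comp[symmetric] mat_app_qvecs)
  next
    case 2 show ?case using BS BA by (simp add: mat_app_comp[symmetric] mat_app_qvecs)
  next
    case 3 show ?case using S A by (simp add: mat_app_comp[symmetric] mat_app_qvecs Sp_hform)
  qed
qed

lemma Sp_id: "mat_id n \<in> Sp n"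
proof -
  have q: "mat_id n \<in> qmatrices n" by (auto simp: qmatrices_def mat_id_def)
  show ?thesis by (rule Sp_intro[OF q q]) (simp_all add: mat_id_app mat_app_qvecs)
qed


section \<open>Negative vectors\<close>

lemma Re1_sum: "Re1 (sum f A) = (\<Sum>x\<in>A. Re1 (f x))"
  by (induction A rule: infinite_finite_induct) auto

lemma hform_first0:
  assumes "w 1 = 0"
  shows "hform n w w = (\<Sum>k\<in>{2..n}. qreal (qnormsq (w k)))"
  using assms by (simp add: hform_def qnormsq_cnj_left)

lemma hform_first0_Re:
  assumes "w 1 = 0"
  shows "Re1 (hform n w w) = (\<Sum>k\<in>{2..n}. qnormsq (w k))"
  using assms by (simp add: hform_first0 Re1_sum)

lemma neg_orth_zero:
  assumes n: "n \<ge> 1" and v: "v \<in> qvecs n" and vneg: "Re1 (hform n v v) < 0"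
    and x: "x \<in> qvecs n" and xv: "hform n x v = 0" and xx: "Re1 (hform n x x) \<le> 0"
  shows "x = (\<lambda>_. 0)"
proof -
  have v1: "v 1 \<noteq> 0"
  proof
    assume "v 1 = 0"
    then have "Re1 (hform n v v) \<ge> 0" by (simp add: hform_first0_Re sum_nonneg qnormsq_nonneg)
    with vneg show False by simp
  qed
  define r where "r = Re1 (hform n v v)"
  have vv: "hform n v v = qreal r" unfolding r_def by (rule hform_real)
  define s where "s = - (qinv (v 1) * x 1)"
  define w where "w = (\<lambda>k. x k + v k * s)"
  have w1: "w 1 = 0"
    unfolding w_def s_def using v1 by (simp add: mult.assoc[symmetric] qinv_right)
  have vx: "hform n v x = 0" using xv hform_cnj[of n x v] by simp
  have "hform n w w = hform n x x + qcnj s * hform n v v * s"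
    unfolding w_def by (simp add: hform_add_left hform_add_right hform_smult_left hform_smult_right xv vx mult.assoc)
  also have "qcnj s * hform n v v * s = qreal (r * qnormsq s)"
  proof -
    have "qcnj s * qreal r * s = qreal r * (qcnj s * s)" by (metis qreal_comm mult.assoc)
    then show ?thesis by (simp add: vv qnormsq_cnj_left qreal_mult)
  qed
  finally have "Re1 (hform n w w) = Re1 (hform n x x) + r * qnormsq s" by simp
  moreover have "Re1 (hform n w w) \<ge> 0" using w1 by (simp add: hform_first0_Re sum_nonneg qnormsq_nonneg)
  moreover have "r < 0" using vneg r_def by simp
  moreover have "qnormsq s \<ge> 0" by (rule qnormsq_nonneg)
  ultimately have "r * qnormsq s = 0" "Re1 (hform n x x) = 0" using xx
    by (smt (verit) mult_nonneg_nonneg mult_nonpos_nonneg)+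
  with \<open>r < 0\<close> have "qnormsq s = 0" by simp
  then have s0: "s = 0" by (simp add: qnormsq_eq0)
  then have x1: "x 1 = 0" unfolding s_def using q_no_zero_div qinv_nz[OF v1] by fastforce
  have "w = x" unfolding w_def s0 by simp
  then have "Re1 (hform n x x) = (\<Sum>k\<in>{2..n}. qnormsq (x k))" using w1 by (simp add: hform_first0_Re)
  with \<open>Re1 (hform n x x) = 0\<close> have "\<forall>k\<in>{2..n}. qnormsq (x k) = 0"
    by (simp add: sum_nonneg_eq_0_iff qnormsq_nonneg)
  then have xmid: "\<forall>k\<in>{2..n}. x k = 0" by (simp add: qnormsq_eq0)
  have "hform n x v = qcnj (v 1) * x (n+1)"
    unfolding hform_def using x1 xmid by simp
  with xv v1 have xn: "x (n+1) = 0" using q_no_zero_div by fastforce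
  show ?thesis
  proof
    fix k show "x k = 0"
    proof (cases "k \<in> {1..n+1}")
      case True
      then have "k = 1 \<or> k \<in> {2..n} \<or> k = n+1" by auto
      then show ?thesis using x1 xmid xn by auto
    next
      case False then show ?thesis using x by (simp add: qvecs_def)
    qed
  qed
qed


section \<open>Reflections\<close>

definition swp :: "nat \<Rightarrow> nat \<Rightarrow> nat" where
  "swp n l = (if l = 1 then n+1 else if l = n+1 then 1 else l)"

lemma hform_alt:
  assumes n: "n \<ge> 1"
  shows "hform n z w = (\<Sum>l\<in>{1..n+1}. qcnj (w (swp n l)) * z l)"
proof -
  let ?f = "\<lambda>l. qcnj (w (swp n l)) * z l"
  have "{1..n+1} = insert 1 {2..n+1}" by auto
  then have "sum ?f {1..n+1} = ?f 1 + sum ?f {2..n+1}" by simp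
  also have "sum ?f {2..n+1} = sum ?f {2..n} + ?f (n+1)"
    using n by (simp add: sum.cl_ivl_Suc)
  also have "sum ?f {2..n} = (\<Sum>k\<in>{2..n}. qcnj (w k) * z k)"
    by (rule sum.cong) (auto simp: swp_def)
  finally show ?thesis using n unfolding hform_def by (simp add: swp_def algebra_simps)
qed

definition refl_mat :: "nat \<Rightarrow> (nat \<Rightarrow> quat) \<Rightarrow> quat \<Rightarrow> (nat \<Rightarrow> nat \<Rightarrow> quat)" where
  "refl_mat n d c = (\<lambda>k l. if k \<in> {1..n+1} \<and> l \<in> {1..n+1}
       then (if k = l then 1 else 0) - d k * c * qcnj (d (swp n l)) else 0)"

lemma refl_qmat: "refl_mat n d c \<in> qmatrices n"
  by (auto simp: refl_mat_def qmatrices_def)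

lemma refl_app:
  assumes n: "n \<ge> 1" and x: "x \<in> qvecs n" and d: "d \<in> qvecs n"
  shows "mat_app n (refl_mat n d c) x = (\<lambda>k. x k - d k * (c * hform n x d))"
proof
  fix k
  show "mat_app n (refl_mat n d c) x k = x k - d k * (c * hform n x d)"
  proof (cases "k \<in> {1..n+1}")
    case True
    have "mat_app n (refl_mat n d c) x k =
        (\<Sum>l\<in>{1..n+1}. (if k = l then x l else 0) - d k * c * (qcnj (d (swp n l)) * x l))"
      using True by (simp only: mat_app_in) (auto simp: refl_mat_def left_diff_distrib mult.assoc intro!: sum.cong)
    also have "\<dots> = x k - d k * c * (\<Sum>l\<in>{1..n+1}. qcnj (d (swp n l)) * x l)"
      using True by (simp add: sum_subtractf sum_distrib_left sum.delta)
    also have "\<dots> = x k - d k * (c * hform n x d)"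
      using n by (simp add: hform_alt mult.assoc)
    finally show ?thesis .
  next
    case False then show ?thesis using x d by (simp add: mat_app_out qvecs_def)
  qed
qed

lemma qvecs_lin: "x \<in> qvecs n \<Longrightarrow> d \<in> qvecs n \<Longrightarrow> (\<lambda>k. x k - d k * e) \<in> qvecs n"
  by (simp add: qvecs_def)

lemma refl_comp:
  assumes c: "c1 + c2 - c2 * hform n d d * c1 = 0"
  shows "(\<lambda>k. (\<lambda>k. x k - d k * (c1 * hform n x d)) k - d k * (c2 * hform n (\<lambda>k. x k - d k * (c1 * hform n x d)) d)) = x"
proof -
  have h: "hform n (\<lambda>k. x k - d k * (c1 * hform n x d)) d = hform n x d - hform n d d * (c1 * hform n x d)"
    by (simp add: hform_sub_left hform_smult_left)
  show ?thesis
  proof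
    fix k
    have "d k * (c1 * hform n x d) + d k * (c2 * (hform n x d - hform n d d * (c1 * hform n x d)))
        = d k * ((c1 + c2 - c2 * hform n d d * c1) * hform n x d)"
      by (simp add: algebra_simps)
    then show "x k - d k * (c1 * hform n x d) - d k * (c2 * hform n (\<lambda>k. x k - d k * (c1 * hform n x d)) d) = x k"
      unfolding h c by (simp add: algebra_simps)
  qed
qed

lemma refl_isom:
  assumes c: "c + qcnj c = qcnj c * hform n d d * c"
  shows "hform n (\<lambda>k. x k - d k * (c * hform n x d)) (\<lambda>k. w k - d k * (c * hform n w d)) = hform n x w"
proof -
  let ?a = "hform n x d" and ?b = "hform n w d" and ?N = "hform n d d"
  have dw: "hform n d w = qcnj ?b" by (simp add: hform_cnj)
  have "hform n (\<lambda>k. x k - d k * (c * ?a)) (\<lambda>k. w k - d k * (c * ?b))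
      = hform n x w - qcnj (c * ?b) * ?a - qcnj ?b * (c * ?a) + qcnj (c * ?b) * ?N * (c * ?a)"
    by (simp add: hform_sub_left hform_sub_right hform_smult_left hform_smult_right dw algebra_simps)
  also have "\<dots> = hform n x w - qcnj ?b * ((c + qcnj c - qcnj c * ?N * c) * ?a)"
    by (simp add: qcnj_mult algebra_simps)
  also have "\<dots> = hform n x w" using c by simp
  finally show ?thesis .
qed

lemma refl_Sp:
  assumes n: "n \<ge> 1" and d: "d \<in> qvecs n" and c: "c + qcnj c = qcnj c * hform n d d * c"
  shows "refl_mat n d c \<in> Sp n"
proof -
  define N where "N = Re1 (hform n d d)"
  have N: "hform n d d = qreal N" unfolding N_def by (rule hform_real)
  have e1: "qcnj c * qreal N * c = qreal (N * qnormsq c)"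
  proof -
    have "qcnj c * qreal N * c = qreal N * (qcnj c * c)" by (metis qreal_comm mult.assoc)
    then show ?thesis by (simp add: qnormsq_cnj_left qreal_mult)
  qed
  have e2: "c * qreal N * qcnj c = qreal (N * qnormsq c)"
  proof -
    have "c * qreal N * qcnj c = qreal N * (c * qcnj c)" by (metis qreal_comm mult.assoc)
    then show ?thesis by (simp add: qnormsq_cnj_right qreal_mult)
  qed
  have c1: "c + qcnj c - qcnj c * hform n d d * c = 0" using c by simp
  have c2: "qcnj c + c - c * hform n d d * qcnj c = 0" using c unfolding N e1 e2 by (simp add: add.commute)
  show ?thesis
  proof (rule Sp_intro[OF refl_qmat refl_qmat[of n d "qcnj c"]], goal_cases)
    case 1 show ?case
      using refl_comp[OF c2] by (simp add: refl_app[OF n _ d] qvecs_lin[OF _ d])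
  next
    case 2 show ?case
      using refl_comp[OF c1] by (simp add: refl_app[OF n _ d] qvecs_lin[OF _ d])
  next
    case 3 show ?case
      using refl_isom[OF c] by (simp add: refl_app[OF n _ d])
  qed
qed


lemma refl_step:
  assumes n: "n \<ge> 1" and z: "z \<in> qvecs n" and y: "y \<in> qvecs n"
    and zy: "hform n z z = hform n y y"
    and a0: "hform n z (\<lambda>k. z k - y k) \<noteq> 0"
  defines "S \<equiv> refl_mat n (\<lambda>k. z k - y k) (qinv (hform n z (\<lambda>k. z k - y k)))"
  shows "S \<in> Sp n" "mat_app n S z = y"
    "\<And>u. u \<in> qvecs n \<Longrightarrow> hform n u (\<lambda>k. z k - y k) = 0 \<Longrightarrow> mat_app n S u = u"
proof -
  define d where "d = (\<lambda>k. z k - y k)"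
  define a where "a = hform n z d"
  define c where "c = qinv a"
  have anz: "a \<noteq> 0" using a0 by (simp add: a_def d_def)
  have d: "d \<in> qvecs n" using z y by (simp add: d_def qvecs_def)
  have ac: "a * c = 1" unfolding c_def using anz by (rule qinv_right)
  have ca: "c * a = 1" unfolding c_def using anz by (rule qinv_left)
  have N: "hform n d d = a + qcnj a"
  proof -
    have "qcnj a = hform n z z - hform n y z" unfolding a_def d_def
      by (simp add: hform_cnj hform_sub_left)
    moreover have "hform n d d = a - (hform n y z - hform n y y)"
      unfolding a_def by (simp add: d_def hform_sub_left hform_sub_right)
    ultimately show ?thesis using zy by simp
  qed
  have C: "c + qcnj c = qcnj c * hform n d d * c"
  proof -
    have "qcnj c * qcnj a = 1" using ac by (metis qcnj_mult qcnj_1)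
    then show ?thesis unfolding N by (simp add: algebra_simps ac mult.assoc[symmetric])
  qed
  have Sdef: "S = refl_mat n d c" unfolding S_def d_def c_def a_def ..
  show "S \<in> Sp n" unfolding Sdef by (rule refl_Sp[OF n d C])
  have "(\<lambda>k. z k - d k * (c * a)) = y" by (simp add: ca d_def)
  then show "mat_app n S z = y" unfolding Sdef refl_app[OF n z d] a_def .
  fix u assume u: "u \<in> qvecs n" and "hform n u (\<lambda>k. z k - y k) = 0"
  then have "hform n u d = 0" by (simp add: d_def)
  then show "mat_app n S u = u" unfolding Sdef refl_app[OF n u d] by simp
qed

lemma witt:
  fixes M :: nat and x y :: "nat \<Rightarrow> nat \<Rightarrow> quat"
  assumes n: "n \<ge> 1"
    and vecs: "\<forall>k\<le>M. x k \<in> qvecs n \<and> y k \<in> qvecs n"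
    and gram: "\<forall>j\<le>M. \<forall>k\<le>M. hform n (x j) (x k) = hform n (y j) (y k)"
    and neg: "Re1 (hform n (x 0) (x 0)) < 0"
  shows "\<exists>A\<in>Sp n. \<forall>k\<le>M. mat_app n A (x k) = y k"
proof -
  have "K \<le> Suc M \<Longrightarrow> \<exists>A\<in>Sp n. \<forall>k<K. mat_app n A (x k) = y k" for K
  proof (induction K)
    case 0 then show ?case using Sp_id by blast
  next
    case (Suc K)
    then obtain A where A: "A \<in> Sp n" "\<forall>k<K. mat_app n A (x k) = y k" by auto
    have KM: "K \<le> M" using Suc.prems by simp
    define z where "z = mat_app n A (x K)"
    have z: "z \<in> qvecs n" unfolding z_def by (rule mat_app_qvecs)
    have yK: "y K \<in> qvecs n" using vecs KM by simp
    have Ahf: "hform n (mat_app n A (x j)) (mat_app n A (x k)) = hform n (y j) (y k)"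
      if "j \<le> M" "k \<le> M" for j k
      using Sp_hform[OF A(1)] vecs gram that by simp
    have zz: "hform n z z = hform n (y K) (y K)" unfolding z_def using Ahf KM by simp
    have orth: "hform n (y j) (\<lambda>k. z k - y K k) = 0" if "j < K" for j
    proof -
      have "hform n (y j) z = hform n (y j) (y K)"
        using Ahf[of j K] A(2) that KM unfolding z_def by simp
      then show ?thesis by (simp add: hform_sub_right)
    qed
    show ?case
    proof (cases "z = y K")
      case True
      then show ?thesis using A z_def by (metis less_Suc_eq)
    next
      case False
      define d where "d = (\<lambda>k. z k - y K k)"
      have d: "d \<in> qvecs n" using z yK by (simp add: d_def qvecs_def)
      have dnz: "d \<noteq> (\<lambda>_. 0)" using False unfolding d_def by (metis eq_iff_diff_eq_0 ext)
      have a0: "hform n z d \<noteq> 0"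
      proof
        assume a: "hform n z d = 0"
        have "hform n d d = hform n z d - hform n (y K) d" unfolding d_def by (simp add: hform_sub_left)
        moreover have "hform n (y K) d = hform n (y K) z - hform n (y K) (y K)"
          unfolding d_def by (simp add: hform_sub_right)
        moreover have "qcnj (hform n z d) = hform n z z - hform n (y K) z"
          unfolding d_def by (simp add: hform_cnj hform_sub_left)
        then have "hform n (y K) z = hform n (y K) (y K) - qcnj (hform n z d)"
          using zz by (simp add: algebra_simps)
        ultimately have dd: "hform n d d = 0" using a by simp
        show False
        proof (cases "K = 0")
          case True
          have "Re1 (hform n z z) < 0" using neg zz gram True Ahf[of 0 0] unfolding z_def by simp
          moreover have "hform n d z = 0" using a hform_cnj[of n z d] by simp
          ultimately have "d = (\<lambda>_. 0)" using neg_orth_zero[OF n z _ d] dd by simp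
          with dnz show False ..
        next
          case False
          have "Re1 (hform n (y 0) (y 0)) < 0" using neg gram by simp
          moreover have "hform n (y 0) d = 0" using orth[of 0] False unfolding d_def by simp
          then have "hform n d (y 0) = 0" using hform_cnj[of n "y 0" d] by simp
          moreover have "y 0 \<in> qvecs n" using vecs by simp
          ultimately have "d = (\<lambda>_. 0)" using neg_orth_zero[OF n _ _ d] dd by simp
          with dnz show False ..
        qed
      qed
      define S where "S = refl_mat n (\<lambda>k. z k - y K k) (qinv (hform n z (\<lambda>k. z k - y K k)))"
      have a0': "hform n z (\<lambda>k. z k - y K k) \<noteq> 0" using a0 d_def by simp
      note RS = refl_step[OF n z yK zz a0', folded S_def]
      have "mat_mult n S A \<in> Sp n" by (rule Sp_mult[OF RS(1) A(1)])
      moreover have "\<forall>k<Suc K. mat_app n (mat_mult n S A) (x k) = y k"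
      proof (intro allI impI)
        fix k assume "k < Suc K"
        then consider "k < K" | "k = K" by linarith
        then show "mat_app n (mat_mult n S A) (x k) = y k"
        proof cases
          case 1
          then have "mat_app n A (x k) = y k" using A by simp
          moreover have "y k \<in> qvecs n" using vecs KM 1 by simp
          ultimately show ?thesis using RS(3) orth[OF 1] by (simp add: mat_app_comp[symmetric])
        next
          case 2 then show ?thesis using RS(2) by (simp add: mat_app_comp[symmetric] z_def)
        qed
      qed
      ultimately show ?thesis by blast
    qed
  qed
  from this[of "Suc M"] show ?thesis by (auto simp: less_Suc_eq_le)
qed


lemma unit_cnj: "qnormsq u = 1 \<Longrightarrow> qcnj u * u = 1 \<and> u * qcnj u = 1"
  by (simp add: qnormsq_cnj_left qnormsq_cnj_right)

lemma lam_const: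
  fixes g h :: "nat \<Rightarrow> nat \<Rightarrow> quat" and l :: "nat \<Rightarrow> quat"
  assumes sg: "semi_normalized m i g" and sh: "semi_normalized m i h"
    and i: "3 \<le> i" "i \<le> m"
    and rel: "\<forall>k\<in>{1..m}. \<forall>j\<in>{1..m}. g k j = qcnj (l k) * h k j * l j"
    and lnz: "\<forall>k\<in>{1..m}. l k \<noteq> 0"
  shows "qnormsq (l 1) = 1 \<and> (\<forall>k\<in>{1..m}. l k = l 1)"
proof -
  have E1: "qcnj (l 1) * l j = 1" if "j \<in> {2..i}" for j
  proof -
    have "g 1 j = 1" "h 1 j = 1" using sg sh that unfolding semi_normalized_def by auto
    moreover have "g 1 j = qcnj (l 1) * h 1 j * l j" using rel that i by auto
    ultimately show ?thesis by simp
  qed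
  have n1: "qnormsq (l 1) * qnormsq (l j) = 1" if "j \<in> {2..i}" for j
    using arg_cong[OF E1[OF that], of qnormsq] by (simp add: qnormsq_mult)
  have "qnormsq (g 2 3) = 1" "qnormsq (h 2 3) = 1" using sg sh unfolding semi_normalized_def by auto
  moreover have "g 2 3 = qcnj (l 2) * h 2 3 * l 3" using rel i by auto
  ultimately have n23: "qnormsq (l 2) * qnormsq (l 3) = 1" by (simp add: qnormsq_mult)
  have a: "qnormsq (l 1) * qnormsq (l 2) = 1" "qnormsq (l 1) * qnormsq (l 3) = 1"
    using n1 i by auto
  have pos: "qnormsq (l 1) > 0" using lnz i by (auto intro: qnormsq_pos)
  have "qnormsq (l 1) * qnormsq (l 1) * (qnormsq (l 2) * qnormsq (l 3)) = 1"
    using a by (metis mult.assoc mult.left_commute mult_1_right)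
  then have "qnormsq (l 1) * qnormsq (l 1) = 1" using n23 by simp
  then have mu: "qnormsq (l 1) = 1" using pos
    by (metis (no_types, opaque_lifting) abs_of_pos abs_square_eq_1 power2_eq_square)
  have uc: "qcnj (l 1) * l 1 = 1" "l 1 * qcnj (l 1) = 1" using unit_cnj[OF mu] by auto
  have inner: "l j = l 1" if "j \<in> {2..i}" for j
  proof -
    have "l j = l 1 * (qcnj (l 1) * l j)" by (metis mult.assoc uc(2) mult_1_left)
    then show ?thesis using E1[OF that] by simp
  qed
  have outer: "l j = l 1" if j: "j \<in> {i+1..m}" for j
  proof -
    have "g j j = -1" "h j j = -1" using sg sh j unfolding semi_normalized_def by auto
    moreover have "g j j = qcnj (l j) * h j j * l j" using rel j i by auto
    ultimately have "qcnj (l j) * l j = 1" by simp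
    then have nj: "qnormsq (l j) = 1" by (simp add: qnormsq_cnj_left qreal_inj flip: qreal_1)
    have "\<exists>r>0. g 1 j = qreal r" using sg j unfolding semi_normalized_def by blast
    then obtain r where r: "r > 0" "g 1 j = qreal r" by blast
    have "\<exists>r>0. h 1 j = qreal r" using sh j unfolding semi_normalized_def by blast
    then obtain s where s: "s > 0" "h 1 j = qreal s" by blast
    have g1j: "g 1 j = qcnj (l 1) * h 1 j * l j" using rel j i by auto
    define t where "t = qcnj (l 1) * l j"
    have "qreal r = qreal s * t" unfolding t_def using r s g1j
      by (metis mult.assoc qreal_comm)
    then have "qreal (1/s) * qreal r = qreal (1/s) * qreal s * t" by (simp add: mult.assoc)
    then have tq: "t = qreal (r / s)" using s by (simp add: qreal_mult)
    have "qnormsq t = 1" unfolding t_def using mu nj by (simp add: qnormsq_mult)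
    then have "(r/s)^2 = 1" unfolding tq qnormsq_qreal .
    then have "r / s = 1" using r s by (smt (verit) divide_pos_pos power2_eq_square real_sqrt_abs real_sqrt_one)
    then have "t = 1" using tq by simp
    then have "l 1 * t = l 1" by simp
    then show ?thesis unfolding t_def by (metis mult.assoc uc(2) mult_1_left)
  qed
  show ?thesis
  proof (intro conjI ballI mu)
    fix k assume "k \<in> {1..m}"
    then have "k = 1 \<or> k \<in> {2..i} \<or> k \<in> {i+1..m}" by auto
    then show "l k = l 1" using inner outer by auto
  qed
qed

lemma orbit_conj:
  assumes "qnormsq \<mu> = 1"
  shows "orbit_V (\<lambda>kj. qcnj \<mu> * V kj * \<mu>) = orbit_V V"
proof
  have uc: "qcnj \<mu> * \<mu> = 1" "\<mu> * qcnj \<mu> = 1" using unit_cnj[OF assms] by auto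
  show "orbit_V (\<lambda>kj. qcnj \<mu> * V kj * \<mu>) \<subseteq> orbit_V V"
  proof
    fix W assume "W \<in> orbit_V (\<lambda>kj. qcnj \<mu> * V kj * \<mu>)"
    then obtain \<nu> where nu: "qnormsq \<nu> = 1" "W = (\<lambda>kj. qcnj \<nu> * (qcnj \<mu> * V kj * \<mu>) * \<nu>)"
      unfolding orbit_V_def by auto
    have "W = (\<lambda>kj. qcnj (\<mu> * \<nu>) * V kj * (\<mu> * \<nu>))" unfolding nu by (simp add: qcnj_mult mult.assoc)
    moreover have "qnormsq (\<mu> * \<nu>) = 1" using nu assms by (simp add: qnormsq_mult)
    ultimately show "W \<in> orbit_V V" unfolding orbit_V_def by blast
  qed
  show "orbit_V V \<subseteq> orbit_V (\<lambda>kj. qcnj \<mu> * V kj * \<mu>)"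
  proof
    fix W assume "W \<in> orbit_V V"
    then obtain \<nu> where nu: "qnormsq \<nu> = 1" "W = (\<lambda>kj. qcnj \<nu> * V kj * \<nu>)"
      unfolding orbit_V_def by auto
    have e: "qcnj \<nu> * V kj * \<nu> = qcnj (qcnj \<mu> * \<nu>) * (qcnj \<mu> * V kj * \<mu>) * (qcnj \<mu> * \<nu>)" for kj
    proof -
      have "qcnj (qcnj \<mu> * \<nu>) * (qcnj \<mu> * V kj * \<mu>) * (qcnj \<mu> * \<nu>)
          = qcnj \<nu> * (\<mu> * qcnj \<mu>) * V kj * (\<mu> * qcnj \<mu>) * \<nu>"
        by (simp add: qcnj_mult mult.assoc)
      then show ?thesis by (simp add: uc)
    qed
    have "W = (\<lambda>kj. qcnj (qcnj \<mu> * \<nu>) * (qcnj \<mu> * V kj * \<mu>) * (qcnj \<mu> * \<nu>))"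
      unfolding nu using e by simp
    moreover have "qnormsq (qcnj \<mu> * \<nu>) = 1" using nu assms by (simp add: qnormsq_mult)
    ultimately show "W \<in> orbit_V (\<lambda>kj. qcnj \<mu> * V kj * \<mu>)" unfolding orbit_V_def by blast
  qed
qed


lemma rsmult_rsmult: "rsmult (rsmult z a) b = rsmult z (a * b)"
  by (simp add: rsmult_def mult.assoc)
lemma rsmult_1: "rsmult z 1 = z" by (simp add: rsmult_def)

lemma qline_qvecs: "z \<in> qvecs n \<Longrightarrow> P \<in> qline z \<Longrightarrow> P \<in> qvecs n"
  by (auto simp: qline_def rsmult_qvecs)

lemma qline_self: "z \<in> qline z"
  unfolding qline_def using rsmult_1 by (metis (mono_tags, lifting) mem_Collect_eq one_neq_zero)

lemma qline_eq:
  assumes "P \<in> qline z" shows "qline P = qline z"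
proof -
  obtain c where c: "c \<noteq> 0" "P = rsmult z c" using assms unfolding qline_def by auto
  show ?thesis
  proof
    show "qline P \<subseteq> qline z"
    proof
      fix u assume "u \<in> qline P"
      then obtain e where e: "e \<noteq> 0" "u = rsmult P e" unfolding qline_def by auto
      have "u = rsmult z (c * e)" using c e by (simp add: rsmult_rsmult)
      moreover have "c * e \<noteq> 0" using c e q_mult_nz by blast
      ultimately show "u \<in> qline z" unfolding qline_def by blast
    qed
    show "qline z \<subseteq> qline P"
    proof
      fix u assume "u \<in> qline z"
      then obtain e where e: "e \<noteq> 0" "u = rsmult z e" unfolding qline_def by auto
      have "u = rsmult P (qinv c * e)"
        using c e by (simp add: rsmult_rsmult mult.assoc[symmetric] qinv_right)
      moreover have "qinv c * e \<noteq> 0" using c e qinv_nz q_mult_nz by blast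
      ultimately show "u \<in> qline P" unfolding qline_def by blast
    qed
  qed
qed

lemma act_qline: "act n A (qline z) = qline (mat_app n A z)"
  unfolding act_def qline_def by (auto simp: mat_app_rsmult[symmetric])

lemma same_line:
  assumes "a \<in> qline z" "b \<in> qline z"
  shows "\<exists>l. l \<noteq> 0 \<and> a = rsmult b l"
proof -
  have "qline b = qline z" using assms(2) by (rule qline_eq)
  with assms(1) show ?thesis unfolding qline_def by auto
qed

lemma config_line:
  assumes "config n m i p" "k \<in> {1..m}"
  shows "\<exists>z\<in>qvecs n. p k = qline z"
proof -
  have "p k \<in> hyp_boundary n \<or> p k \<in> hyp_space n"
    using assms unfolding config_def by (cases "k \<le> i") auto
  then show ?thesis unfolding hyp_boundary_def hyp_space_def by auto
qed

lemma lift_line: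
  assumes "config n m i p" "is_lift m p P" "k \<in> {1..m}"
  shows "P k \<in> qvecs n" "p k = qline (P k)"
proof -
  obtain z where z: "z \<in> qvecs n" "p k = qline z" using config_line[OF assms(1,3)] by blast
  have "P k \<in> p k" using assms(2,3) unfolding is_lift_def by blast
  then show "P k \<in> qvecs n" "p k = qline (P k)" using z qline_qvecs qline_eq by auto
qed

lemma gram_in: "k \<in> {1..m} \<Longrightarrow> j \<in> {1..m} \<Longrightarrow> gram n m P k j = hform n (P j) (P k)"
  by (simp add: gram_def)

lemma sandwich_cnj: "qcnj (qcnj \<mu> * a * \<mu>) = qcnj \<mu> * qcnj a * \<mu>"
  by (simp add: qcnj_mult mult.assoc)

lemma V_of_conj:
  assumes "\<forall>k\<in>{1..m}. \<forall>j\<in>{1..m}. g k j = qcnj \<mu> * h k j * \<mu>"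
  shows "V_of m i g = (\<lambda>kj. qcnj \<mu> * V_of m i h kj * \<mu>)"
proof
  fix kj :: "nat \<times> nat"
  obtain k j where kj: "kj = (k, j)" by fastforce
  show "V_of m i g kj = qcnj \<mu> * V_of m i h kj * \<mu>"
  proof (cases "(k = 1 \<and> i < j \<and> j \<le> m) \<or> (2 \<le> k \<and> k < j \<and> j \<le> m)")
    case True
    then have "k \<in> {1..m}" "j \<in> {1..m}" by auto
    then show ?thesis using True assms unfolding kj V_of_def by auto
  next
    case False then show ?thesis unfolding kj V_of_def by auto
  qed
qed

lemma gram_from_V:
  fixes g h :: "nat \<Rightarrow> nat \<Rightarrow> quat"
  assumes sg: "semi_normalized m i g" and sh: "semi_normalized m i h"
    and herm_g: "\<forall>k\<in>{1..m}. \<forall>j\<in>{1..m}. g k j = qcnj (g j k)"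
    and herm_h: "\<forall>k\<in>{1..m}. \<forall>j\<in>{1..m}. h k j = qcnj (h j k)"
    and mu: "qnormsq \<mu> = 1"
    and V: "V_of m i g = (\<lambda>kj. qcnj \<mu> * V_of m i h kj * \<mu>)"
  shows "\<forall>k\<in>{1..m}. \<forall>j\<in>{1..m}. g k j = qcnj \<mu> * h k j * \<mu>"
proof -
  have uc: "qcnj \<mu> * \<mu> = 1" using unit_cnj[OF mu] by auto
  have lt: "g k j = qcnj \<mu> * h k j * \<mu>" if "k \<in> {1..m}" "j \<in> {1..m}" "k < j" for k j
  proof (cases "k = 1 \<and> j \<le> i")
    case True
    then have j2: "j \<in> {2..i}" using that by auto
    have g1: "\<forall>j\<in>{2..i}. g 1 j = 1" using sg unfolding semi_normalized_def by blast
    have h1: "\<forall>j\<in>{2..i}. h 1 j = 1" using sh unfolding semi_normalized_def by blast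
    have "g k j = 1" "h k j = 1" using g1 h1 j2 True by auto
    then show ?thesis using uc by simp
  next
    case False
    then have c: "(k = 1 \<and> i < j \<and> j \<le> m) \<or> (2 \<le> k \<and> k < j \<and> j \<le> m)" using that by auto
    have "V_of m i g (k, j) = qcnj \<mu> * V_of m i h (k, j) * \<mu>" using V by (rule fun_cong)
    moreover have "V_of m i g (k, j) = g k j" "V_of m i h (k, j) = h k j"
      using c unfolding V_of_def by (simp only: case_prod_conv if_True)+
    ultimately show ?thesis by simp
  qed
  have eq: "g k k = qcnj \<mu> * h k k * \<mu>" if "k \<in> {1..m}" for k
  proof (cases "k \<le> i")
    case True
    then have "k \<in> {1..i}" using that by auto
    moreover have "\<forall>k\<in>{1..i}. g k k = 0" "\<forall>k\<in>{1..i}. h k k = 0"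
      using sg sh unfolding semi_normalized_def by blast+
    ultimately have "g k k = 0" "h k k = 0" by blast+
    then show ?thesis by simp
  next
    case False
    then have "k \<in> {i+1..m}" using that by auto
    moreover have "\<forall>k\<in>{i+1..m}. g k k = -1" "\<forall>k\<in>{i+1..m}. h k k = -1"
      using sg sh unfolding semi_normalized_def by blast+
    ultimately have "g k k = -1" "h k k = -1" by blast+
    then show ?thesis using uc by simp
  qed
  show ?thesis
  proof (intro ballI)
    fix k j assume k: "k \<in> {1..m}" and j: "j \<in> {1..m}"
    consider "k < j" | "k = j" | "j < k" by linarith
    then show "g k j = qcnj \<mu> * h k j * \<mu>"
    proof cases
      case 1 then show ?thesis using lt k j by blast
    next
      case 2 then show ?thesis using eq k by blast
    next
      case 3
      have "g k j = qcnj (g j k)" using herm_g k j by blast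
      also have "\<dots> = qcnj (qcnj \<mu> * h j k * \<mu>)" using lt[OF j k 3] by simp
      also have "\<dots> = qcnj \<mu> * h k j * \<mu>" using herm_h k j by (metis sandwich_cnj)
      finally show ?thesis .
    qed
  qed
qed


lemma gram_ext:
  fixes a b :: "nat \<Rightarrow> nat \<Rightarrow> quat" and c :: quat
  assumes G: "\<forall>j\<in>{1..m}. \<forall>k\<in>{1..m}. hform n (a j) (a k) = hform n (b j) (b k)" and m: "2 \<le> m"
  defines "ea \<equiv> (\<lambda>k. if k = 0 then (\<lambda>t. a 1 t - a 2 t * c) else a k)"
    and "eb \<equiv> (\<lambda>k. if k = 0 then (\<lambda>t. b 1 t - b 2 t * c) else b k)"
  shows "\<forall>j\<le>m. \<forall>k\<le>m. hform n (ea j) (ea k) = hform n (eb j) (eb k)"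
proof (intro allI impI)
  fix j k assume j: "j \<le> m" and k: "k \<le> m"
  have G': "hform n (a j') (a k') = hform n (b j') (b k')" if "j' \<in> {1..m}" "k' \<in> {1..m}" for j' k'
    using G that by blast
  have i1: "1 \<in> {1..m}" and i2: "2 \<in> {1..m}" using m by auto
  have ea0: "ea 0 = (\<lambda>t. a 1 t - a 2 t * c)" and eb0: "eb 0 = (\<lambda>t. b 1 t - b 2 t * c)"
    unfolding ea_def eb_def by simp_all
  have eak: "ea t = a t" "eb t = b t" if "t \<noteq> 0" for t unfolding ea_def eb_def using that by simp_all
  show "hform n (ea j) (ea k) = hform n (eb j) (eb k)"
  proof (cases "j = 0"; cases "k = 0")
    assume "j = 0" "k = 0"
    have e: "hform n (a 1) (a 1) = hform n (b 1) (b 1)" "hform n (a 1) (a 2) = hform n (b 1) (b 2)"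
      "hform n (a 2) (a 1) = hform n (b 2) (b 1)" "hform n (a 2) (a 2) = hform n (b 2) (b 2)"
      using G'[OF i1 i1] G'[OF i1 i2] G'[OF i2 i1] G'[OF i2 i2] by auto
    show ?thesis using \<open>j = 0\<close> \<open>k = 0\<close>
      by (simp only: ea0 eb0 hform_sub_left hform_sub_right hform_smult_left hform_smult_right e)
  next
    assume "j = 0" "k \<noteq> 0"
    then have kk: "k \<in> {1..m}" using k by auto
    then show ?thesis using \<open>j = 0\<close>
      by (simp only: ea0 eb0 eak[OF \<open>k \<noteq> 0\<close>] hform_sub_left hform_smult_left G'[OF i1 kk] G'[OF i2 kk])
  next
    assume "j \<noteq> 0" "k = 0"
    then have jj: "j \<in> {1..m}" using j by auto
    then show ?thesis using \<open>k = 0\<close>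
      by (simp only: ea0 eb0 eak[OF \<open>j \<noteq> 0\<close>] hform_sub_right hform_smult_right G'[OF jj i1] G'[OF jj i2])
  next
    assume "j \<noteq> 0" "k \<noteq> 0"
    then have "j \<in> {1..m}" "k \<in> {1..m}" using j k by auto
    then show ?thesis using G' by (simp only: eak[OF \<open>j \<noteq> 0\<close>] eak[OF \<open>k \<noteq> 0\<close>])
  qed
qed

theorem lemma8p8:
  fixes n m i :: nat
    and p q :: "nat \<Rightarrow> (nat \<Rightarrow> quat) set"
    and P Q :: "nat \<Rightarrow> (nat \<Rightarrow> quat)"
  assumes "n \<ge> 1" and "m \<ge> 4" and "3 \<le> i" and "i \<le> m"
    and "config n m i p" and "config n m i q"
    and "is_lift m p P" and "is_lift m q Q"
    and "semi_normalized m i (gram n m P)"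
    and "semi_normalized m i (gram n m Q)"
  shows "congruent_tuples n m p q \<longleftrightarrow>
         orbit_V (V_of m i (gram n m P)) = orbit_V (V_of m i (gram n m Q))"
proof -
  note n = assms(1)
  note cp = assms(5) and cq = assms(6) and lp = assms(7) and lq = assms(8)
  note sg = assms(9) and sh = assms(10)
  define g where "g = gram n m P"
  define h where "h = gram n m Q"
  have Pv: "P k \<in> qvecs n" "p k = qline (P k)" if "k \<in> {1..m}" for k
    using lift_line[OF cp lp that] by auto
  have Qv: "Q k \<in> qvecs n" "q k = qline (Q k)" if "k \<in> {1..m}" for k
    using lift_line[OF cq lq that] by auto
  show ?thesis
  proof
    assume "congruent_tuples n m p q"
    then obtain A where A: "A \<in> Sp n" "\<forall>k\<in>{1..m}. act n A (p k) = q k"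
      unfolding congruent_tuples_def by blast
    have "\<forall>k\<in>{1..m}. \<exists>l. l \<noteq> 0 \<and> mat_app n A (P k) = rsmult (Q k) l"
    proof
      fix k assume k: "k \<in> {1..m}"
      have "mat_app n A (P k) \<in> qline (Q k)"
        using A(2) k Pv[OF k] Qv[OF k] act_qline qline_self by metis
      then show "\<exists>l. l \<noteq> 0 \<and> mat_app n A (P k) = rsmult (Q k) l"
        using same_line qline_self by blast
    qed
    then obtain l where l: "\<forall>k\<in>{1..m}. l k \<noteq> 0 \<and> mat_app n A (P k) = rsmult (Q k) (l k)"
      by metis
    have rel: "\<forall>k\<in>{1..m}. \<forall>j\<in>{1..m}. g k j = qcnj (l k) * h k j * l j"
    proof (intro ballI)
      fix k j assume k: "k \<in> {1..m}" and j: "j \<in> {1..m}"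
      have "g k j = hform n (P j) (P k)" unfolding g_def using k j by (rule gram_in)
      also have "\<dots> = hform n (mat_app n A (P j)) (mat_app n A (P k))"
        using Sp_hform[OF A(1) Pv(1)[OF j] Pv(1)[OF k]] by simp
      also have "\<dots> = hform n (rsmult (Q j) (l j)) (rsmult (Q k) (l k))" using l j k by simp
      also have "\<dots> = qcnj (l k) * h k j * l j"
        unfolding h_def gram_in[OF k j] by (simp add: hform_rsmult_left hform_rsmult_right mult.assoc)
      finally show "g k j = qcnj (l k) * h k j * l j" .
    qed
    have lc: "qnormsq (l 1) = 1 \<and> (\<forall>k\<in>{1..m}. l k = l 1)"
      by (rule lam_const[OF sg[folded g_def] sh[folded h_def] assms(3,4) rel]) (use l in blast)
    have "\<forall>k\<in>{1..m}. \<forall>j\<in>{1..m}. g k j = qcnj (l 1) * h k j * l 1"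
    proof (intro ballI)
      fix k j assume k: "k \<in> {1..m}" and j: "j \<in> {1..m}"
      have "l k = l 1" "l j = l 1" using lc k j by blast+
      then show "g k j = qcnj (l 1) * h k j * l 1" using rel k j by metis
    qed
    then have Vg: "V_of m i g = (\<lambda>kj. qcnj (l 1) * V_of m i h kj * l 1)" by (rule V_of_conj)
    have "orbit_V (V_of m i g) = orbit_V (V_of m i h)"
      unfolding Vg using orbit_conj[of "l 1" "V_of m i h"] lc by blast
    then show "orbit_V (V_of m i (gram n m P)) = orbit_V (V_of m i (gram n m Q))"
      unfolding g_def h_def .
  next
    assume orb: "orbit_V (V_of m i (gram n m P)) = orbit_V (V_of m i (gram n m Q))"
    have "V_of m i g \<in> orbit_V (V_of m i g)"
      unfolding orbit_V_def by (rule CollectI, rule exI[of _ 1]) simp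
    then have "V_of m i g \<in> orbit_V (V_of m i h)" using orb unfolding g_def h_def by simp
    then obtain \<mu> where mu: "qnormsq \<mu> = 1" "V_of m i g = (\<lambda>kj. qcnj \<mu> * V_of m i h kj * \<mu>)"
      unfolding orbit_V_def by blast
    have herm_g: "\<forall>k\<in>{1..m}. \<forall>j\<in>{1..m}. g k j = qcnj (g j k)"
      unfolding g_def by (simp add: gram_in hform_cnj)
    have herm_h: "\<forall>k\<in>{1..m}. \<forall>j\<in>{1..m}. h k j = qcnj (h j k)"
      unfolding h_def by (simp add: gram_in hform_cnj)
    have rel: "\<forall>k\<in>{1..m}. \<forall>j\<in>{1..m}. g k j = qcnj \<mu> * h k j * \<mu>"
      by (rule gram_from_V[OF sg[folded g_def] sh[folded h_def] herm_g herm_h mu])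
    define Q' where "Q' = (\<lambda>k. rsmult (Q k) \<mu>)"
    define c where "c = qreal (1/2)"
    define x where "x = (\<lambda>k. if k = 0 then (\<lambda>t. P 1 t - P 2 t * c) else P k)"
    define y where "y = (\<lambda>k. if k = 0 then (\<lambda>t. Q' 1 t - Q' 2 t * c) else Q' k)"
    have m2: "2 \<le> m" using assms(2) by simp
    have i1: "1 \<in> {1..m}" and i2: "2 \<in> {1..m}" using m2 by auto
    have G: "\<forall>j\<in>{1..m}. \<forall>k\<in>{1..m}. hform n (P j) (P k) = hform n (Q' j) (Q' k)"
    proof (intro ballI)
      fix j k assume j: "j \<in> {1..m}" and k: "k \<in> {1..m}"
      have "hform n (P j) (P k) = g k j" unfolding g_def using gram_in[OF k j] by simp
      also have "\<dots> = qcnj \<mu> * h k j * \<mu>" using rel j k by blast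
      also have "\<dots> = hform n (Q' j) (Q' k)"
        unfolding h_def Q'_def gram_in[OF k j] by (simp add: hform_rsmult_left hform_rsmult_right mult.assoc)
      finally show "hform n (P j) (P k) = hform n (Q' j) (Q' k)" .
    qed
    have Gx: "\<forall>j\<le>m. \<forall>k\<le>m. hform n (x j) (x k) = hform n (y j) (y k)"
      using gram_ext[OF G m2, of c] unfolding x_def y_def by blast
    have vecs: "\<forall>k\<le>m. x k \<in> qvecs n \<and> y k \<in> qvecs n"
    proof (intro allI impI)
      fix k assume k: "k \<le> m"
      have Q'v: "Q' k \<in> qvecs n" if "k \<in> {1..m}" for k
        unfolding Q'_def using Qv(1)[OF that] by (rule rsmult_qvecs)
      show "x k \<in> qvecs n \<and> y k \<in> qvecs n"
      proof (cases "k = 0")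
        case True
        then show ?thesis unfolding x_def y_def
          using qvecs_lin[OF Pv(1)[OF i1] Pv(1)[OF i2]] qvecs_lin[OF Q'v[OF i1] Q'v[OF i2]] by simp
      next
        case False
        then have "k \<in> {1..m}" using k by auto
        then show ?thesis unfolding x_def y_def using False Pv(1) Q'v by simp
      qed
    qed
    have neg: "Re1 (hform n (x 0) (x 0)) < 0"
    proof -
      have g11: "hform n (P 1) (P 1) = 0"
      proof -
        have "g 1 1 = 0" using sg assms(3) unfolding g_def semi_normalized_def by auto
        then show ?thesis using gram_in[OF i1 i1] unfolding g_def by simp
      qed
      have g22: "hform n (P 2) (P 2) = 0"
      proof -
        have "g 2 2 = 0" using sg assms(3) unfolding g_def semi_normalized_def by auto
        then show ?thesis using gram_in[OF i2 i2] unfolding g_def by simp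
      qed
      have g12: "hform n (P 2) (P 1) = 1"
      proof -
        have "g 1 2 = 1" using sg assms(3) unfolding g_def semi_normalized_def by auto
        then show ?thesis using gram_in[OF i1 i2] unfolding g_def by simp
      qed
      have g21: "hform n (P 1) (P 2) = 1" using g12 hform_cnj[of n "P 2" "P 1"] by simp
      have "hform n (x 0) (x 0) = - (c + c)" unfolding x_def using g11 g22 g12 g21
        by (simp add: hform_sub_left hform_sub_right hform_smult_left hform_smult_right c_def)
      also have "\<dots> = qreal (-1)" unfolding c_def by (simp add: qreal_add qreal_neg qreal_neg1)
      finally show ?thesis by simp
    qed
    obtain A where A: "A \<in> Sp n" "\<forall>k\<le>m. mat_app n A (x k) = y k"
      using witt[OF n vecs Gx neg] by blast
    have munz: "\<mu> \<noteq> 0" using mu(1) by (auto simp: qnormsq_def)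
    have "\<forall>k\<in>{1..m}. act n A (p k) = q k"
    proof
      fix k assume k: "k \<in> {1..m}"
      have "mat_app n A (P k) = Q' k" using A(2) k unfolding x_def y_def by auto
      moreover have "Q' k \<in> qline (Q k)" unfolding Q'_def qline_def using munz by blast
      ultimately show "act n A (p k) = q k"
        using Pv(2)[OF k] Qv(2)[OF k] act_qline qline_eq by metis
    qed
    then show "congruent_tuples n m p q" unfolding congruent_tuples_def using A(1) by blast
  qed
qed

end
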